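(* The theory $\mathbb{R}\mathsf{FR}^\ast$ is unstable.
   Context: An $\mathbb{R}$-forest is a complete extended ($[0,\infty]$-valued) metric space in which each set $\{y:d(x,y)<\infty\}$ is an $\mathbb{R}$-tree. For a subset $X_0$ of an $\mathbb{R}$-forest, $\langle X_0\rangle$ is the smallest sub-$\mathbb{R}$-forest containing it; finitely generated means $=\langle X_0\rangle$ for finite $X_0$. $\mathbb{R}\mathsf{FR}$ is the theory in the language with an extended metric and a $[0,1]$-valued binary predicate $R$ saying the underlying space is an $\mathbb{R}$-forest and $R$ is $1$-$1$-Lipschitz ($R(a,\cdot)$ and $R(\cdot,a)$ are $1$-Lipschitz for all $a$). A model $A$ is t.e.c. if every finitely generated model $C\supseteq B$ of $\mathbb{R}\mathsf{FR}$, with $B\subseteq A$ finitely generated, embeds into $A$ over $B$. $\mathbb{R}\mathsf{FR}^\ast$ is the common theory of all t.e.c. models of $\mathbb{R}\mathsf{FR}$. *)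

theory Defs
  imports "HOL-Analysis.Analysis"
begin

record 'a rstruct =
  carr  :: "'a set"
  edist :: "'a \<Rightarrow> 'a \<Rightarrow> ennreal"
  rel   :: "'a \<Rightarrow> 'a \<Rightarrow> real"

definition ext_metric :: "'a set \<Rightarrow> ('a \<Rightarrow> 'a \<Rightarrow> ennreal) \<Rightarrow> bool" where
  "ext_metric S d \<longleftrightarrow>
     (\<forall>x\<in>S. \<forall>y\<in>S. (d x y = 0 \<longleftrightarrow> x = y) \<and> d x y = d y x) \<and>
     (\<forall>x\<in>S. \<forall>y\<in>S. \<forall>z\<in>S. d x z \<le> d x y + d y z)"

definition ext_complete :: "'a set \<Rightarrow> ('a \<Rightarrow> 'a \<Rightarrow> ennreal) \<Rightarrow> bool" where
  "ext_complete S d \<longleftrightarrow>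
     (\<forall>u::nat \<Rightarrow> 'a. (\<forall>n. u n \<in> S) \<and>
          (\<forall>e>(0::real). \<exists>N. \<forall>m\<ge>N. \<forall>n\<ge>N. d (u m) (u n) < ennreal e) \<longrightarrow>
          (\<exists>x\<in>S. \<forall>e>(0::real). \<exists>N. \<forall>n\<ge>N. d (u n) x < ennreal e))"

definition path_cont :: "'a set \<Rightarrow> ('a \<Rightarrow> 'a \<Rightarrow> ennreal) \<Rightarrow> (real \<Rightarrow> 'a) \<Rightarrow> bool" where
  "path_cont S d p \<longleftrightarrow>
     (\<forall>t\<in>{0..1}. p t \<in> S) \<and>
     (\<forall>t\<in>{0..1::real}. \<forall>e>(0::real). \<exists>\<delta>>0. \<forall>s\<in>{0..1}. \<bar>s - t\<bar> < \<delta> \<longrightarrow> d (p s) (p t) < ennreal e)"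

definition geodesic :: "('a \<Rightarrow> 'a \<Rightarrow> ennreal) \<Rightarrow> 'a \<Rightarrow> 'a \<Rightarrow> (real \<Rightarrow> 'a) \<Rightarrow> bool" where
  "geodesic d x y g \<longleftrightarrow>
     g 0 = x \<and> g (enn2real (d x y)) = y \<and>
     (\<forall>s\<in>{0..enn2real (d x y)}. \<forall>t\<in>{0..enn2real (d x y)}. d (g s) (g t) = ennreal \<bar>s - t\<bar>)"

text \<open>R-tree: a (finite-valued) metric space in which any two points are joined by a
  geodesic segment, and every arc between them has the image of that segment (so the
  arc is unique and it is a geodesic segment).\<close>
definition real_tree :: "'a set \<Rightarrow> ('a \<Rightarrow> 'a \<Rightarrow> ennreal) \<Rightarrow> bool" where
  "real_tree S d \<longleftrightarrow>
     S \<noteq> {} \<and> ext_metric S d \<and> (\<forall>x\<in>S. \<forall>y\<in>S. d x y < \<infinity>) \<and>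
     (\<forall>x\<in>S. \<forall>y\<in>S. \<exists>g. geodesic d x y g \<and> g ` {0..enn2real (d x y)} \<subseteq> S) \<and>
     (\<forall>x\<in>S. \<forall>y\<in>S. \<forall>g p.
        geodesic d x y g \<and> g ` {0..enn2real (d x y)} \<subseteq> S \<and>
        path_cont S d p \<and> inj_on p {0..1} \<and> p 0 = x \<and> p 1 = y \<longrightarrow>
        p ` {0..1} = g ` {0..enn2real (d x y)})"

definition real_forest :: "'a set \<Rightarrow> ('a \<Rightarrow> 'a \<Rightarrow> ennreal) \<Rightarrow> bool" where
  "real_forest S d \<longleftrightarrow>
     ext_metric S d \<and> ext_complete S d \<and> (\<forall>x\<in>S. real_tree {y\<in>S. d x y < \<infinity>} d)"

definition gen_forest :: "'a set \<Rightarrow> ('a \<Rightarrow> 'a \<Rightarrow> ennreal) \<Rightarrow> 'a set \<Rightarrow> 'a set" where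
  "gen_forest S d X = \<Inter>{T. T \<subseteq> S \<and> X \<subseteq> T \<and> real_forest T d}"

definition fin_gen :: "'a set \<Rightarrow> ('a \<Rightarrow> 'a \<Rightarrow> ennreal) \<Rightarrow> bool" where
  "fin_gen S d \<longleftrightarrow> (\<exists>X. finite X \<and> X \<subseteq> S \<and> S = gen_forest S d X)"

definition rfr_model :: "('a, 'b) rstruct_scheme \<Rightarrow> bool" where
  "rfr_model M \<longleftrightarrow>
     real_forest (carr M) (edist M) \<and>
     (\<forall>x\<in>carr M. \<forall>y\<in>carr M. 0 \<le> rel M x y \<and> rel M x y \<le> 1) \<and>
     (\<forall>a\<in>carr M. \<forall>x\<in>carr M. \<forall>y\<in>carr M.
        ennreal \<bar>rel M a x - rel M a y\<bar> \<le> edist M x y \<and>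
        ennreal \<bar>rel M x a - rel M y a\<bar> \<le> edist M x y)"

definition lstruct :: "'a rstruct \<Rightarrow> bool" where
  "lstruct M \<longleftrightarrow>
     ext_metric (carr M) (edist M) \<and> ext_complete (carr M) (edist M) \<and>
     (\<forall>x\<in>carr M. \<forall>y\<in>carr M. 0 \<le> rel M x y \<and> rel M x y \<le> 1) \<and>
     (\<forall>a\<in>carr M. \<forall>x\<in>carr M. \<forall>y\<in>carr M.
        ennreal \<bar>rel M a x - rel M a y\<bar> \<le> edist M x y \<and>
        ennreal \<bar>rel M x a - rel M y a\<bar> \<le> edist M x y)"

definition restr :: "'a rstruct \<Rightarrow> 'a set \<Rightarrow> 'a rstruct" where
  "restr M S = M\<lparr>carr := S\<rparr>"

definition embedding :: "('a \<Rightarrow> 'b) \<Rightarrow> 'a rstruct \<Rightarrow> 'b rstruct \<Rightarrow> bool" where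
  "embedding f M N \<longleftrightarrow>
     f ` carr M \<subseteq> carr N \<and>
     (\<forall>x\<in>carr M. \<forall>y\<in>carr M. edist N (f x) (f y) = edist M x y \<and> rel N (f x) (f y) = rel M x y)"

text \<open>A finitely generated extension C \<supseteq> B is represented by an
  embedding g : B \<rightarrow> C; finitely generated R-forests have at most continuum many
  points, so C may be taken with carrier in the type real without loss.\<close>
definition tec :: "'a rstruct \<Rightarrow> bool" where
  "tec A \<longleftrightarrow> rfr_model A \<and>
     (\<forall>S. S \<subseteq> carr A \<and> rfr_model (restr A S) \<and> fin_gen S (edist A) \<longrightarrow>
        (\<forall>(C::real rstruct) g.
           rfr_model C \<and> fin_gen (carr C) (edist C) \<and> embedding g (restr A S) C \<longrightarrow>
           (\<exists>f. embedding f C A \<and> (\<forall>x\<in>S. f (g x) = x))))"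

text \<open>The atomic distance formula is interpreted through the homeomorphism
  [0,\<infinity>] \<rightarrow> [0,1], t \<mapsto> t/(1+t), \<infinity> \<mapsto> 1. Connectives are arbitrary continuous
  unary / binary functions on [0,1].\<close>
datatype fm =
    Dist nat nat
  | Rel nat nat
  | Conn1 "real \<Rightarrow> real" fm
  | Conn2 "real \<Rightarrow> real \<Rightarrow> real" fm fm
  | Sup nat fm
  | Inf nat fm

fun wf_fm :: "fm \<Rightarrow> bool" where
  "wf_fm (Dist i j) = True"
| "wf_fm (Rel i j) = True"
| "wf_fm (Conn1 f \<phi>) = (continuous_on {0..1} f \<and> f ` {0..1} \<subseteq> {0..1} \<and> wf_fm \<phi>)"
| "wf_fm (Conn2 f \<phi> \<psi>) = (continuous_on ({0..1} \<times> {0..1}) (\<lambda>(u, v). f u v) \<and>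
      (\<lambda>(u, v). f u v) ` ({0..1} \<times> {0..1}) \<subseteq> {0..1} \<and> wf_fm \<phi> \<and> wf_fm \<psi>)"
| "wf_fm (Sup x \<phi>) = wf_fm \<phi>"
| "wf_fm (Inf x \<phi>) = wf_fm \<phi>"

fun fv :: "fm \<Rightarrow> nat set" where
  "fv (Dist i j) = {i, j}"
| "fv (Rel i j) = {i, j}"
| "fv (Conn1 f \<phi>) = fv \<phi>"
| "fv (Conn2 f \<phi> \<psi>) = fv \<phi> \<union> fv \<psi>"
| "fv (Sup x \<phi>) = fv \<phi> - {x}"
| "fv (Inf x \<phi>) = fv \<phi> - {x}"

definition dtrunc :: "ennreal \<Rightarrow> real" where
  "dtrunc v = (if v = \<infinity> then 1 else enn2real v / (1 + enn2real v))"

fun eval :: "'a rstruct \<Rightarrow> (nat \<Rightarrow> 'a) \<Rightarrow> fm \<Rightarrow> real" where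
  "eval M \<sigma> (Dist i j) = dtrunc (edist M (\<sigma> i) (\<sigma> j))"
| "eval M \<sigma> (Rel i j) = rel M (\<sigma> i) (\<sigma> j)"
| "eval M \<sigma> (Conn1 f \<phi>) = f (eval M \<sigma> \<phi>)"
| "eval M \<sigma> (Conn2 f \<phi> \<psi>) = f (eval M \<sigma> \<phi>) (eval M \<sigma> \<psi>)"
| "eval M \<sigma> (Sup x \<phi>) = (SUP a\<in>carr M. eval M (\<sigma>(x := a)) \<phi>)"
| "eval M \<sigma> (Inf x \<phi>) = (INF a\<in>carr M. eval M (\<sigma>(x := a)) \<phi>)"

definition sentence :: "fm \<Rightarrow> bool" where
  "sentence \<phi> \<longleftrightarrow> wf_fm \<phi> \<and> fv \<phi> = {}"

definition sat :: "'a rstruct \<Rightarrow> fm \<Rightarrow> bool" where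
  "sat M \<phi> \<longleftrightarrow> (\<forall>\<sigma>. (\<forall>v. \<sigma> v \<in> carr M) \<longrightarrow> eval M \<sigma> \<phi> = 0)"

definition rfr_star :: "'a itself \<Rightarrow> fm set" where
  "rfr_star (_ :: 'a itself) = {\<phi>. sentence \<phi> \<and> (\<forall>A :: 'a rstruct. tec A \<longrightarrow> sat A \<phi>)}"

definition model_of :: "fm set \<Rightarrow> 'a rstruct \<Rightarrow> bool" where
  "model_of T M \<longleftrightarrow> lstruct M \<and> (\<forall>\<phi>\<in>T. sat M \<phi>)"

definition unstable :: "'a itself \<Rightarrow> fm set \<Rightarrow> bool" where
  "unstable (_ :: 'a itself) T \<longleftrightarrow>
     (\<exists>\<phi> (k::nat) (r::real) s. wf_fm \<phi> \<and> r < s \<and>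
       (\<forall>n::nat. \<exists>M :: 'a rstruct. model_of T M \<and>
          (\<exists>a b. (\<forall>i v. a i v \<in> carr M) \<and> (\<forall>j v. b j v \<in> carr M) \<and>
             (\<forall>i<n. \<forall>j<n.
                (i < j \<longrightarrow> eval M (\<lambda>v. if v < k then a i v else b j v) \<phi> \<le> r) \<and>
                (j \<le> i \<longrightarrow> s \<le> eval M (\<lambda>v. if v < k then a i v else b j v) \<phi>)))))"

end

theory Submission
  imports Defs
begin

definition ddisc :: "real \<Rightarrow> real \<Rightarrow> ennreal" where
  "ddisc x y = (if x = y then 0 else \<infinity>)"

lemma real_forest_empty: "real_forest {} d"
  unfolding real_forest_def ext_metric_def ext_complete_def by auto

lemma ext_metric_disc: "ext_metric F ddisc"
  unfolding ext_metric_def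
proof (intro conjI ballI)
  fix x y assume "x \<in> F" "y \<in> F"
  show "(ddisc x y = 0) = (x = y)" by (simp add: ddisc_def)
  show "ddisc x y = ddisc y x" by (simp add: ddisc_def)
next
  fix x y z assume "x \<in> F" "y \<in> F" "z \<in> F"
  show "ddisc x z \<le> ddisc x y + ddisc y z"
  proof (cases "x = z")
    case True then show ?thesis by (simp add: ddisc_def)
  next
    case False
    then have "x \<noteq> y \<or> y \<noteq> z" by blast
    then show ?thesis by (auto simp add: ddisc_def)
  qed
qed

lemma ext_complete_disc: "ext_complete F ddisc"
  unfolding ext_complete_def
proof (intro allI impI)
  fix u :: "nat \<Rightarrow> real"
  assume h: "(\<forall>n. u n \<in> F) \<and> (\<forall>e>(0::real). \<exists>N. \<forall>m\<ge>N. \<forall>n\<ge>N. ddisc (u m) (u n) < ennreal e)"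
  then have cau: "\<forall>e>(0::real). \<exists>N. \<forall>m\<ge>N. \<forall>n\<ge>N. ddisc (u m) (u n) < ennreal e" by (rule conjunct2)
  have "\<exists>N. \<forall>m\<ge>N. \<forall>n\<ge>N. ddisc (u m) (u n) < ennreal 1"
    using cau[rule_format, OF zero_less_one] .
  then obtain N where N: "\<forall>m\<ge>N. \<forall>n\<ge>N. ddisc (u m) (u n) < ennreal 1" by blast
  have eq: "\<forall>n\<ge>N. u n = u N"
  proof (intro allI impI)
    fix n assume "n \<ge> N"
    then have "ddisc (u n) (u N) < ennreal 1" using N by auto
    then show "u n = u N" unfolding ddisc_def by (cases "u n = u N") auto
  qed
  show "\<exists>x\<in>F. \<forall>e>(0::real). \<exists>N. \<forall>n\<ge>N. ddisc (u n) x < ennreal e"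
  proof (rule bexI[where x = "u N"])
    show "u N \<in> F" using h[THEN conjunct1] by (rule spec)
    show "\<forall>e>(0::real). \<exists>M. \<forall>n\<ge>M. ddisc (u n) (u N) < ennreal e"
    proof (intro allI impI exI[of _ N])
      fix e :: real and n assume "0 < e" "N \<le> n"
      have "u n = u N" using eq \<open>N \<le> n\<close> by blast
      then show "ddisc (u n) (u N) < ennreal e" using \<open>0 < e\<close> by (simp add: ddisc_def)
    qed
  qed
qed

lemma real_tree_single: "real_tree {x} ddisc"
  unfolding real_tree_def
proof (intro conjI)
  show "ext_metric {x} ddisc" by (rule ext_metric_disc)
  show "\<forall>xa\<in>{x}. \<forall>y\<in>{x}. \<exists>g. geodesic ddisc xa y g \<and> g ` {0..enn2real (ddisc xa y)} \<subseteq> {x}"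
    by (auto simp: geodesic_def ddisc_def intro!: exI[of _ "\<lambda>_. x"])
  show "\<forall>xa\<in>{x}. \<forall>y\<in>{x}. \<forall>g p. geodesic ddisc xa y g \<and> g ` {0..enn2real (ddisc xa y)} \<subseteq> {x} \<and>
        path_cont {x} ddisc p \<and> inj_on p {0..1} \<and> p 0 = xa \<and> p 1 = y \<longrightarrow>
        p ` {0..1} = g ` {0..enn2real (ddisc xa y)}"
  proof (intro ballI allI impI)
    fix xa y g and p :: "real \<Rightarrow> real"
    assume "xa \<in> {x}" "y \<in> {x}" and h: "geodesic ddisc xa y g \<and> g ` {0..enn2real (ddisc xa y)} \<subseteq> {x} \<and>
        path_cont {x} ddisc p \<and> inj_on p {0..1} \<and> p 0 = xa \<and> p 1 = y"
    then have "p 0 = p 1" by auto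
    moreover have "inj_on p {0..1}" using h by auto
    ultimately have "(0::real) = 1" by (auto dest: inj_onD)
    then show "p ` {0..1} = g ` {0..enn2real (ddisc xa y)}" by simp
  qed
qed (auto simp: ddisc_def)

lemma real_forest_disc: "real_forest F ddisc"
proof -
  have "{y\<in>F. ddisc x y < \<infinity>} = {x}" if "x \<in> F" for x
    using that by (auto simp: ddisc_def)
  then show ?thesis
    unfolding real_forest_def using ext_metric_disc ext_complete_disc real_tree_single by auto
qed

lemma disc_model:
  assumes "finite F" and "\<forall>x y. 0 \<le> Rc x y \<and> Rc x y \<le> 1"
  shows "rfr_model \<lparr>carr = F, edist = ddisc, rel = Rc\<rparr> \<and> fin_gen F ddisc"
proof
  show "rfr_model \<lparr>carr = F, edist = ddisc, rel = Rc\<rparr>"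
    unfolding rfr_model_def using real_forest_disc assms(2) by (auto simp: ddisc_def)
  have "gen_forest F ddisc F = F"
    unfolding gen_forest_def using real_forest_disc by auto
  then show "fin_gen F ddisc" unfolding fin_gen_def using assms(1) by auto
qed

theorem proposition2p32:
  assumes "\<exists>A :: 'a rstruct. tec A"
  shows "unstable TYPE('a) (rfr_star TYPE('a))"
proof -
  obtain A :: "'a rstruct" where A: "tec A" using assms by blast
  have mA: "rfr_model A" using A unfolding tec_def by (rule conjunct1)
  have tecS: "\<forall>S. S \<subseteq> carr A \<and> rfr_model (restr A S) \<and> fin_gen S (edist A) \<longrightarrow>
        (\<forall>(C::real rstruct) g.
           rfr_model C \<and> fin_gen (carr C) (edist C) \<and> embedding g (restr A S) C \<longrightarrow>
           (\<exists>f. embedding f C A \<and> (\<forall>x\<in>S. f (g x) = x)))"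
    using A unfolding tec_def by (rule conjunct2)
  have lA: "lstruct A" using mA unfolding rfr_model_def real_forest_def lstruct_def by simp
  have modA: "model_of (rfr_star TYPE('a)) A"
    unfolding model_of_def rfr_star_def using lA A by simp
  have emb: "\<exists>f. embedding f C A" if "rfr_model C" "fin_gen (carr C) (edist C)" for C :: "real rstruct"
  proof -
    have "rfr_model (restr A {})" unfolding rfr_model_def restr_def using real_forest_empty by auto
    moreover have "fin_gen {} (edist A)" unfolding fin_gen_def gen_forest_def
      using real_forest_empty by auto
    moreover have "embedding (\<lambda>x. undefined) (restr A {}) C" unfolding embedding_def restr_def by auto
    ultimately have "\<exists>f. embedding f C A \<and> (\<forall>x\<in>{}. f ((\<lambda>x. undefined) x) = x)"
      using tecS[rule_format, of "{}" C "\<lambda>x. undefined"] that by blast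
    then show ?thesis by blast
  qed
  define Rc :: "real \<Rightarrow> real \<Rightarrow> real" where
    "Rc = (\<lambda>x y. if 0 \<le> x \<and> y < 0 \<and> - y - 1 \<le> x then 1 else 0)"
  have Rc01: "\<forall>x y. 0 \<le> Rc x y \<and> Rc x y \<le> 1" unfolding Rc_def by auto
  have key: "\<exists>M :: 'a rstruct. model_of (rfr_star TYPE('a)) M \<and>
          (\<exists>a b. (\<forall>i v. a i v \<in> carr M) \<and> (\<forall>j v. b j v \<in> carr M) \<and>
             (\<forall>i<n. \<forall>j<n.
                (i < j \<longrightarrow> eval M (\<lambda>v. if v < 1 then a i v else b j v) (Rel 0 1) \<le> 0) \<and>
                (j \<le> i \<longrightarrow> 1 \<le> eval M (\<lambda>v. if v < 1 then a i v else b j v) (Rel 0 1))))" for n :: nat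
  proof -
    define F where "F = (\<lambda>i. real i) ` {..n} \<union> (\<lambda>j. - real j - 1) ` {..n}"
    define C :: "real rstruct" where "C = \<lparr>carr = F, edist = ddisc, rel = Rc\<rparr>"
    have "finite F" unfolding F_def by auto
    then have "rfr_model C \<and> fin_gen (carr C) (edist C)"
      using disc_model[OF _ Rc01] unfolding C_def by auto
    then obtain f where f: "embedding f C A" using emb by blast
    define a where "a = (\<lambda>(i::nat) (v::nat). f (real (min i n)))"
    define b where "b = (\<lambda>(j::nat) (v::nat). f (- real (min j n) - 1))"
    have inF1: "real (min i n) \<in> F" for i unfolding F_def by auto
    have inF2: "- real (min j n) - 1 \<in> F" for j unfolding F_def by auto
    have fF: "f ` F \<subseteq> carr A" and frel: "\<forall>x\<in>F. \<forall>y\<in>F. rel A (f x) (f y) = Rc x y"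
      using f unfolding embedding_def C_def by auto
    have ev: "eval A (\<lambda>v. if v < 1 then a i v else b j v) (Rel 0 1)
              = Rc (real (min i n)) (- real (min j n) - 1)" for i j
      using frel inF1 inF2 by (simp add: a_def b_def)
    have c1: "\<forall>i v. a i v \<in> carr A" using fF inF1 by (auto simp: a_def)
    have c2: "\<forall>j v. b j v \<in> carr A" using fF inF2 by (auto simp: b_def)
    have c3: "\<forall>i<n. \<forall>j<n.
                (i < j \<longrightarrow> eval A (\<lambda>v. if v < 1 then a i v else b j v) (Rel 0 1) \<le> 0) \<and>
                (j \<le> i \<longrightarrow> 1 \<le> eval A (\<lambda>v. if v < 1 then a i v else b j v) (Rel 0 1))"
      unfolding ev by (simp add: Rc_def)
    show ?thesis using modA c1 c2 c3 by blast
  qed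
  show ?thesis
    unfolding unstable_def
    apply (rule exI[of _ "Rel 0 1"])
    apply (rule exI[of _ "1::nat"])
    apply (rule exI[of _ "0::real"])
    apply (rule exI[of _ "1::real"])
    using key by simp
qed

end
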